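(* There is a constant $c$ such that for all binary strings $x,y$, $\mathrm{KP}(x\mid y)\le \min\{\mathrm{KP}(q) : [q](y)=x\}+c$. However, the difference $\min\{\mathrm{KP}(q) : [q](y)=x\}-\mathrm{KP}(x\mid y)$ is unbounded (over all pairs $x,y$).
   Context: A computable partial function $U(p,x)$ is prefix-free (in $p$) if for every $x$ the set of $p$ with $U(p,x)$ defined contains no string together with a proper prefix of it. $\mathrm{KP}(y\mid x)=\min\{|p|: U(p,x)=y\}$ for a prefix-free $U$ that is optimal (minimal up to an additive constant among prefix-free computable partial functions); the unconditional prefix complexity $\mathrm{KP}(q)$ is defined analogously with machines without a second argument. $[q](x)$ denotes the output of program $q$ on input $x$ in a fixed programming language (a computable numbering of all computable partial functions of one string argument with the $s$-$m$-$n$/Gödel property, i.e. programs in any other such language can be computably translated into it). *)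

theory Defs
  imports Main "HOL-Library.Extended_Nat"
begin

datatype recf = Z | S | Id nat | Cn recf "recf list" | Pr recf recf | Mn recf

inductive eval :: "recf \<Rightarrow> nat list \<Rightarrow> nat \<Rightarrow> bool" where
  ev_Z: "eval Z xs 0"
| ev_S: "eval S (x # xs) (Suc x)"
| ev_Id: "n < length xs \<Longrightarrow> eval (Id n) xs (xs ! n)"
| ev_Cn: "length ys = length gs \<Longrightarrow> (\<forall>i < length gs. eval (gs ! i) xs (ys ! i))
          \<Longrightarrow> eval f ys z \<Longrightarrow> eval (Cn f gs) xs z"
| ev_Pr0: "eval f xs y \<Longrightarrow> eval (Pr f g) (0 # xs) y"
| ev_PrS: "eval (Pr f g) (n # xs) y \<Longrightarrow> eval g (n # y # xs) z
          \<Longrightarrow> eval (Pr f g) (Suc n # xs) z"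
| ev_Mn: "eval f (y # xs) 0 \<Longrightarrow> (\<forall>z < y. \<exists>v. v \<noteq> 0 \<and> eval f (z # xs) v)
          \<Longrightarrow> eval (Mn f) xs y"

text \<open>Binary strings are bool lists; bijective encoding into nat.\<close>
fun enc :: "bool list \<Rightarrow> nat" where
  "enc [] = 0"
| "enc (b # xs) = 2 * enc xs + (if b then 2 else 1)"

definition computable1 :: "(bool list \<Rightarrow> bool list option) \<Rightarrow> bool" where
  "computable1 f \<longleftrightarrow> (\<exists>r. \<forall>x z. f x = Some z \<longleftrightarrow> eval r [enc x] (enc z))"

definition computable2 :: "(bool list \<Rightarrow> bool list \<Rightarrow> bool list option) \<Rightarrow> bool" where
  "computable2 f \<longleftrightarrow> (\<exists>r. \<forall>p x z. f p x = Some z \<longleftrightarrow> eval r [enc p, enc x] (enc z))"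

definition prefix_free2 :: "(bool list \<Rightarrow> bool list \<Rightarrow> bool list option) \<Rightarrow> bool" where
  "prefix_free2 U \<longleftrightarrow> (\<forall>x p q. U p x \<noteq> None \<and> U q x \<noteq> None \<and> (\<exists>r. q = p @ r) \<longrightarrow> p = q)"

definition prefix_free1 :: "(bool list \<Rightarrow> bool list option) \<Rightarrow> bool" where
  "prefix_free1 M \<longleftrightarrow> (\<forall>p q. M p \<noteq> None \<and> M q \<noteq> None \<and> (\<exists>r. q = p @ r) \<longrightarrow> p = q)"

text \<open>KP_U(y|x) = min length of p with U(p,x)=y (infinity if none).\<close>
definition KPc :: "(bool list \<Rightarrow> bool list \<Rightarrow> bool list option) \<Rightarrow> bool list \<Rightarrow> bool list \<Rightarrow> enat" where
  "KPc U y x = (INF p \<in> {p. U p x = Some y}. enat (length p))"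

definition KPu :: "(bool list \<Rightarrow> bool list option) \<Rightarrow> bool list \<Rightarrow> enat" where
  "KPu M y = (INF p \<in> {p. M p = Some y}. enat (length p))"

definition optimal_cond :: "(bool list \<Rightarrow> bool list \<Rightarrow> bool list option) \<Rightarrow> bool" where
  "optimal_cond U \<longleftrightarrow> computable2 U \<and> prefix_free2 U \<and>
     (\<forall>V. computable2 V \<and> prefix_free2 V \<longrightarrow> (\<exists>c::nat. \<forall>x y. KPc U y x \<le> KPc V y x + enat c))"

definition optimal_uncond :: "(bool list \<Rightarrow> bool list option) \<Rightarrow> bool" where
  "optimal_uncond M \<longleftrightarrow> computable1 M \<and> prefix_free1 M \<and>
     (\<forall>V. computable1 V \<and> prefix_free1 V \<longrightarrow> (\<exists>c::nat. \<forall>y. KPu M y \<le> KPu V y + enat c))"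

text \<open>nu q is the partial function computed by program q. A Goedel numbering is a
  computable numbering into which every computable numbering can be computably translated.\<close>
definition goedel_numbering :: "(bool list \<Rightarrow> bool list \<Rightarrow> bool list option) \<Rightarrow> bool" where
  "goedel_numbering nu \<longleftrightarrow> computable2 nu \<and>
     (\<forall>mu. computable2 mu \<longrightarrow>
        (\<exists>t. computable1 (\<lambda>q. Some (t q)) \<and> (\<forall>q. nu (t q) = mu q)))"

end

theory Submission
  imports Defs
begin


inductive_cases evZ_E: "eval Z xs v"
inductive_cases evS_E: "eval S xs v"
inductive_cases evId_E: "eval (Id n) xs v"
inductive_cases evCn_E: "eval (Cn f gs) xs v"
inductive_cases evPr0_E: "eval (Pr f g) (0 # xs) v"
inductive_cases evPrS_E: "eval (Pr f g) (Suc n # xs) v"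
inductive_cases evMn_E: "eval (Mn f) xs v"

lemma eval_Z: "eval Z xs v \<longleftrightarrow> v = 0"
  by (auto elim: evZ_E intro: eval.intros)

lemma eval_S: "eval S (x # xs) v \<longleftrightarrow> v = Suc x"
  by (auto elim: evS_E intro: eval.intros)

lemma eval_Id: "eval (Id n) xs v \<longleftrightarrow> n < length xs \<and> v = xs ! n"
  by (auto elim: evId_E intro: eval.intros)

lemma eval_Cn: "eval (Cn f gs) xs z \<longleftrightarrow>
   (\<exists>ys. length ys = length gs \<and> (\<forall>i < length gs. eval (gs ! i) xs (ys ! i)) \<and> eval f ys z)"
  by (auto elim: evCn_E intro: eval.intros)

lemma eval_Cn1: "eval (Cn f [g]) xs z \<longleftrightarrow> (\<exists>u. eval g xs u \<and> eval f [u] z)"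
proof
  assume "eval (Cn f [g]) xs z"
  then obtain ys where "length ys = 1" "eval g xs (ys ! 0)" "eval f ys z"
    unfolding eval_Cn by auto
  then show "\<exists>u. eval g xs u \<and> eval f [u] z"
    by (metis One_nat_def length_0_conv length_Suc_conv nth_Cons_0)
next
  assume "\<exists>u. eval g xs u \<and> eval f [u] z"
  then obtain u where "eval g xs u" "eval f [u] z" by auto
  then show "eval (Cn f [g]) xs z" unfolding eval_Cn
    by (intro exI[of _ "[u]"]) auto
qed

lemma eval_Cn2: "eval (Cn f [g, h]) xs z \<longleftrightarrow> (\<exists>u w. eval g xs u \<and> eval h xs w \<and> eval f [u, w] z)"
proof
  assume "eval (Cn f [g, h]) xs z"
  then obtain ys where ys: "length ys = Suc (Suc 0)" "\<forall>i < Suc (Suc 0). eval ([g, h] ! i) xs (ys ! i)" "eval f ys z"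
    unfolding eval_Cn by (simp only: length_Cons list.size(3)) blast
  from ys(2) have g: "eval g xs (ys ! 0)" by auto
  from ys(2) have h: "eval h xs (ys ! 1)" by auto
  have "ys = [ys ! 0, ys ! 1]" using ys(1)
    by (cases ys; cases "tl ys") auto
  with g h ys(3) show "\<exists>u w. eval g xs u \<and> eval h xs w \<and> eval f [u, w] z" by metis
next
  assume "\<exists>u w. eval g xs u \<and> eval h xs w \<and> eval f [u, w] z"
  then obtain u w where "eval g xs u" "eval h xs w" "eval f [u, w] z" by auto
  then show "eval (Cn f [g, h]) xs z" unfolding eval_Cn
    by (intro exI[of _ "[u, w]"]) (auto simp: less_Suc_eq nth_Cons')
qed

lemma eval_Pr0: "eval (Pr f g) (0 # xs) v \<longleftrightarrow> eval f xs v"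
  by (auto elim: evPr0_E intro: eval.intros)

lemma eval_PrS: "eval (Pr f g) (Suc n # xs) z \<longleftrightarrow> (\<exists>y. eval (Pr f g) (n # xs) y \<and> eval g (n # y # xs) z)"
  by (auto elim: evPrS_E intro: eval.intros)

lemma eval_Mn: "eval (Mn f) xs y \<longleftrightarrow> eval f (y # xs) 0 \<and> (\<forall>z < y. \<exists>v. v \<noteq> 0 \<and> eval f (z # xs) v)"
  by (auto elim: evMn_E intro: eval.intros)

definition ADD where "ADD = Pr (Id 0) (Cn S [Id 1])"
lemma eval_ADD: "eval ADD [k, x] v \<longleftrightarrow> v = k + x"
  unfolding ADD_def
proof (induction k arbitrary: v)
  case 0 then show ?case by (simp add: eval_Pr0 eval_Id)
next
  case (Suc k) then show ?case by (simp add: eval_PrS eval_Cn1 eval_Id eval_S)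
qed

definition PRED where "PRED = Pr Z (Id 0)"
lemma eval_PRED: "eval PRED [k] v \<longleftrightarrow> v = k - 1"
  unfolding PRED_def
proof (induction k arbitrary: v)
  case 0 then show ?case by (simp add: eval_Pr0 eval_Z)
next
  case (Suc k) then show ?case by (simp add: eval_PrS eval_Id)
qed

definition MONUS where "MONUS = Pr (Id 0) (Cn PRED [Id 1])"
lemma eval_MONUS: "eval MONUS [k, x] v \<longleftrightarrow> v = x - k"
  unfolding MONUS_def
proof (induction k arbitrary: v)
  case 0 then show ?case by (simp add: eval_Pr0 eval_Id)
next
  case (Suc k) then show ?case by (simp add: eval_PrS eval_Cn1 eval_Id eval_PRED)
qed

definition COND where "COND = Cn ADD [Cn MONUS [Id 0, Id 1],
   Cn MONUS [Cn ADD [Id 1, Cn ADD [Id 1, Id 1]], Cn ADD [Id 0, Id 0]]]"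
lemma eval_COND: "eval COND [e, a] v \<longleftrightarrow> v = (a - e) + (2 * e - 3 * a)"
  unfolding COND_def by (auto simp: eval_Cn2 eval_Id eval_ADD eval_MONUS)

definition GUARD where "GUARD = Mn (Cn COND [Id 1, Id 2])"
lemma eval_GUARD: "eval GUARD [e, a] v \<longleftrightarrow> v = 0 \<and> a \<le> e \<and> 2 * e \<le> 3 * a"
  unfolding GUARD_def eval_Mn by (auto simp: eval_Cn2 eval_Id eval_COND)

definition VR where "VR = Cn ADD [Cn GUARD [Id 0, Id 1], Id 0]"
lemma eval_VR: "eval VR [e, a] v \<longleftrightarrow> v = e \<and> a \<le> e \<and> 2 * e \<le> 3 * a"
  unfolding VR_def by (auto simp: eval_Cn2 eval_Id eval_GUARD eval_ADD)



lemma card_bl: "card {xs :: bool list. length xs = n} = 2 ^ n"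
  using card_lists_length_eq[of "UNIV :: bool set" n] by simp

lemma finite_bl: "finite {xs :: bool list. length xs = n}"
  using finite_lists_length_eq[of "UNIV :: bool set" n] by simp

lemma finite_bl_le: "finite {xs :: bool list. length xs \<le> n}"
  using finite_lists_length_le[of "UNIV :: bool set" n] by simp

definition pfree :: "bool list set \<Rightarrow> bool" where
  "pfree D \<longleftrightarrow> (\<forall>p\<in>D. \<forall>q\<in>D. (\<exists>r. q = p @ r) \<longrightarrow> p = q)"

lemma kraft:
  assumes "pfree D"
  shows "(\<Sum>p\<in>{p\<in>D. length p \<le> L}. (2::nat) ^ (L - length p)) \<le> 2 ^ L"
proof -
  let ?I = "{p\<in>D. length p \<le> L}"
  define E where "E p = (\<lambda>r. p @ r) ` {r :: bool list. length r = L - length p}" for p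
  have finI: "finite ?I" by (rule finite_subset[OF _ finite_bl_le[of L]]) auto
  have cardE: "card (E p) = 2 ^ (L - length p)" for p
    unfolding E_def by (subst card_image) (auto simp: inj_on_def card_bl)
  have disj: "\<forall>i\<in>?I. \<forall>j\<in>?I. i \<noteq> j \<longrightarrow> E i \<inter> E j = {}"
  proof (intro ballI impI)
    fix i j assume i: "i \<in> ?I" and j: "j \<in> ?I" and ne: "i \<noteq> j"
    show "E i \<inter> E j = {}"
    proof (rule ccontr)
      assume "E i \<inter> E j \<noteq> {}"
      then obtain r s where "i @ r = j @ s" unfolding E_def by auto
      then have "(\<exists>us. j = i @ us) \<or> (\<exists>us. i = j @ us)"
        by (auto simp: append_eq_append_conv2)
      then show False using assms i j ne unfolding pfree_def by blast
    qed
  qed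
  have "(\<Sum>p\<in>?I. (2::nat) ^ (L - length p)) = (\<Sum>p\<in>?I. card (E p))" by (simp add: cardE)
  also have "\<dots> = card (\<Union>(E ` ?I))"
    by (rule card_UN_disjoint[symmetric]) (use finI disj in \<open>auto simp: E_def finite_bl\<close>)
  also have "\<dots> \<le> card {xs :: bool list. length xs = L}"
    by (rule card_mono[OF finite_bl]) (auto simp: E_def)
  finally show ?thesis by (simp add: card_bl)
qed

definition NN :: "bool list set \<Rightarrow> nat \<Rightarrow> nat" where "NN D L = card {p\<in>D. length p \<le> L}"
definition RR :: "bool list set \<Rightarrow> nat \<Rightarrow> nat" where "RR D L = (\<Sum>p\<in>{p\<in>D. length p \<le> L}. (2::nat) ^ (L - length p) - 1)"

lemma RR_le: "pfree D \<Longrightarrow> RR D L \<le> 2 ^ L"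
  unfolding RR_def
  by (rule order_trans[OF sum_mono kraft]) auto

lemma RR_step: "2 * RR D L + NN D L \<le> RR D (Suc L)"
proof -
  let ?I = "{p\<in>D. length p \<le> L}" and ?J = "{p\<in>D. length p \<le> Suc L}"
  have finJ: "finite ?J" by (rule finite_subset[OF _ finite_bl_le[of "Suc L"]]) auto
  have eq: "(2::nat) ^ (Suc L - length p) - 1 = 2 * (2 ^ (L - length p) - 1) + 1" if "length p \<le> L" for p
  proof -
    have "Suc L - length p = Suc (L - length p)" using that by simp
    moreover have "(1::nat) \<le> 2 ^ (L - length p)" by simp
    moreover have "\<And>t::nat. 1 \<le> t \<Longrightarrow> 2 * t - 1 = 2 * (t - 1) + 1" by arith
    ultimately show ?thesis by simp
  qed
  have "2 * RR D L + NN D L = (\<Sum>p\<in>?I. 2 * (2 ^ (L - length p) - 1)) + (\<Sum>p\<in>?I. 1)"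
    unfolding RR_def NN_def by (simp add: sum_distrib_left)
  also have "\<dots> = (\<Sum>p\<in>?I. 2 * (2 ^ (L - length p) - 1) + 1)"
    by (rule sum.distrib[symmetric])
  also have "\<dots> = (\<Sum>p\<in>?I. (2::nat) ^ (Suc L - length p) - 1)"
    by (rule sum.cong[OF refl]) (metis (mono_tags, lifting) eq mem_Collect_eq)
  also have "\<dots> \<le> (\<Sum>p\<in>?J. (2::nat) ^ (Suc L - length p) - 1)"
    by (rule sum_mono2[OF finJ]) auto
  finally show ?thesis unfolding RR_def .
qed

lemma growth:
  fixes k :: nat
  assumes "\<And>k. 2 ^ k \<le> NN D (f + k)"
  shows "k * 2 ^ k \<le> 2 * RR D (f + k)"
proof (induction k)
  case 0 then show ?case by simp
next
  case (Suc k)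
  have "Suc k * 2 ^ Suc k = 2 * (k * 2 ^ k) + 2 * 2 ^ k" by simp
  also have "\<dots> \<le> 2 * (2 * RR D (f + k)) + 2 * NN D (f + k)"
    using Suc.IH assms[of k] by linarith
  also have "\<dots> \<le> 2 * RR D (f + Suc k)"
    using RR_step[of D "f + k"] by simp
  finally show ?case .
qed

lemma no_growth:
  fixes f :: nat
  assumes "pfree D" "\<And>k. 2 ^ k \<le> NN D (f + k)"
  shows False
proof -
  define k :: nat where "k = 2 ^ (f + 1) + 1"
  have "k * 2 ^ k \<le> 2 * RR D (f + k)" by (rule growth[OF assms(2)])
  also have "\<dots> \<le> 2 * 2 ^ (f + k)" using RR_le[OF assms(1)] by simp
  also have "\<dots> = 2 ^ (f + 1) * 2 ^ k" by (simp add: power_add)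
  finally have "k * 2 ^ k \<le> 2 ^ (f + 1) * 2 ^ k" .
  then have "k \<le> 2 ^ (f + 1)" by simp
  then show False unfolding k_def by simp
qed

lemma enc_append: "enc (p @ r) = enc p + 2 ^ length p * enc r"
  by (induction p) auto

lemma enc_upper: "enc p + 2 \<le> 2 ^ (length p + 1)"
  by (induction p) auto

lemma enc_lower: "2 ^ length p \<le> enc p + 1"
  by (induction p) auto

lemma enc_inj: "enc x = enc y \<Longrightarrow> x = y"
proof (induction x arbitrary: y)
  case Nil then show ?case by (cases y) (auto split: if_splits)
next
  case (Cons a x)
  show ?case
  proof (cases y)
    case Nil then show ?thesis using Cons.prems by (auto split: if_splits)
  next
    case (Cons b z)
    have eq: "2 * enc x + (if a then 2 else 1) = 2 * enc z + (if b then 2 else 1)"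
      using Cons.prems Cons by simp
    have ab: "a = b" using eq by (auto split: if_splits; presburger)
    then have "enc x = enc z" using eq by simp
    then show ?thesis using Cons.IH ab Cons by simp
  qed
qed

lemma enc_surj: "\<exists>x. enc x = n"
proof (induction n rule: less_induct)
  case (less n)
  show ?case
  proof (cases "n = 0")
    case True then show ?thesis by (intro exI[of _ "[]"]) simp
  next
    case False
    show ?thesis
    proof (cases "odd n")
      case True
      then obtain m where m: "n = 2 * m + 1" by (metis oddE)
      with less obtain x where "enc x = m" by fastforce
      then show ?thesis using m by (intro exI[of _ "False # x"]) simp
    next
      case ev: False
      have "n = 2 * (n div 2 - 1) + 2" using ev False by presburger
      then obtain m where m: "n = 2 * m + 2" by blast
      with less obtain x where "enc x = m" by fastforce
      then show ?thesis using m by (intro exI[of _ "True # x"]) simp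
    qed
  qed
qed

definition dec where "dec n = (SOME x. enc x = n)"
lemma enc_dec[simp]: "enc (dec n) = n"
  unfolding dec_def by (rule someI_ex[OF enc_surj])


lemma enat_part1:
  fixes U :: "bool list \<Rightarrow> bool list \<Rightarrow> bool list option"
    and M :: "bool list \<Rightarrow> bool list option"
    and nu :: "bool list \<Rightarrow> bool list \<Rightarrow> bool list option"
  assumes "optimal_cond U" and "optimal_uncond M" and "goedel_numbering nu"
  shows "\<exists>c::nat. \<forall>x y. KPc U x y \<le> (INF q \<in> {q. nu q y = Some x}. KPu M q) + enat c"
proof -
  obtain rM where rM: "\<forall>x z. M x = Some z \<longleftrightarrow> eval rM [enc x] (enc z)"
    using assms(2) unfolding optimal_uncond_def computable1_def by blast
  obtain rN where rN: "\<forall>p x z. nu p x = Some z \<longleftrightarrow> eval rN [enc p, enc x] (enc z)"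
    using assms(3) unfolding goedel_numbering_def computable2_def by blast
  define V1 where "V1 p y = (case M p of None \<Rightarrow> None | Some q \<Rightarrow> nu q y)" for p y
  have comp: "computable2 V1"
    unfolding computable2_def
  proof (intro exI[of _ "Cn rN [Cn rM [Id 0], Id 1]"] allI)
    fix p x z
    have e: "eval (Cn rN [Cn rM [Id 0], Id 1]) [enc p, enc x] (enc z) \<longleftrightarrow>
          (\<exists>u. eval rM [enc p] u \<and> eval rN [u, enc x] (enc z))"
      by (auto simp: eval_Cn2 eval_Cn1 eval_Id)
    show "V1 p x = Some z \<longleftrightarrow> eval (Cn rN [Cn rM [Id 0], Id 1]) [enc p, enc x] (enc z)"
      unfolding e
    proof
      assume "V1 p x = Some z"
      then obtain q where "M p = Some q" "nu q x = Some z" unfolding V1_def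
        by (auto split: option.splits)
      then show "\<exists>u. eval rM [enc p] u \<and> eval rN [u, enc x] (enc z)"
        using rM rN by blast
    next
      assume "\<exists>u. eval rM [enc p] u \<and> eval rN [u, enc x] (enc z)"
      then obtain u where u: "eval rM [enc p] u" "eval rN [u, enc x] (enc z)" by blast
      have "M p = Some (dec u)" using rM u(1) by simp
      moreover have "nu (dec u) x = Some z" using rN u(2) by simp
      ultimately show "V1 p x = Some z" unfolding V1_def by simp
    qed
  qed
  have pf: "prefix_free2 V1"
    using assms(2) unfolding prefix_free2_def optimal_uncond_def prefix_free1_def V1_def
    by (metis option.simps(4))
  obtain c where c: "\<forall>x y. KPc U y x \<le> KPc V1 y x + enat c"
    using assms(1) comp pf unfolding optimal_cond_def by blast
  have le: "KPc V1 x y \<le> (INF q \<in> {q. nu q y = Some x}. KPu M q)" for x y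
  proof (rule INF_greatest)
    fix q assume q: "q \<in> {q. nu q y = Some x}"
    show "KPc V1 x y \<le> KPu M q"
      unfolding KPu_def
    proof (rule INF_greatest)
      fix p assume "p \<in> {p. M p = Some q}"
      then have "V1 p y = Some x" using q unfolding V1_def by simp
      then show "KPc V1 x y \<le> enat (length p)" unfolding KPc_def
        by (intro INF_lower) simp
    qed
  qed
  show ?thesis
  proof (intro exI[of _ c] allI)
    fix x y
    show "KPc U x y \<le> (INF q \<in> {q. nu q y = Some x}. KPu M q) + enat c"
      using c le[of x y] by (meson add_right_mono order_trans)
  qed
qed


lemma enc_pos: "r \<noteq> [] \<Longrightarrow> 1 \<le> enc r"
  by (cases r) auto

lemma part2:
  fixes U :: "bool list \<Rightarrow> bool list \<Rightarrow> bool list option"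
    and M :: "bool list \<Rightarrow> bool list option"
    and nu :: "bool list \<Rightarrow> bool list \<Rightarrow> bool list option"
  assumes "optimal_cond U" and "optimal_uncond M" and "goedel_numbering nu"
  shows "\<forall>d::nat. \<exists>x y. KPc U x y + enat d < (INF q \<in> {q. nu q y = Some x}. KPu M q)"
proof
  fix d :: nat
  define V2 where "V2 p y = (if enc y \<le> enc p \<and> 2 * enc p \<le> 3 * enc y then Some p else None)"
    for p y :: "bool list"
  have comp: "computable2 V2"
    unfolding computable2_def
  proof (intro exI[of _ VR] allI)
    fix p x z
    show "V2 p x = Some z \<longleftrightarrow> eval VR [enc p, enc x] (enc z)"
      unfolding eval_VR V2_def using enc_inj by auto
  qed
  have pf: "prefix_free2 V2"
    unfolding prefix_free2_def
  proof (intro allI impI)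
    fix x p q
    assume h: "V2 p x \<noteq> None \<and> V2 q x \<noteq> None \<and> (\<exists>r. q = p @ r)"
    then obtain r where q: "q = p @ r" by blast
    show "p = q"
    proof (cases "r = []")
      case True then show ?thesis using q by simp
    next
      case False
      have hp: "enc x \<le> enc p" and hq: "2 * enc q \<le> 3 * enc x"
        using h unfolding V2_def by (auto split: if_splits)
      have "(2::nat) ^ length p * 1 \<le> 2 ^ length p * enc r"
        using enc_pos[OF False] by (intro mult_le_mono2)
      then have "enc p + 2 ^ length p \<le> enc q" using q enc_append by simp
      moreover have "enc p + 2 \<le> 2 * 2 ^ length p" using enc_upper[of p] by simp
      ultimately show ?thesis using hp hq by linarith
    qed
  qed
  obtain c0 where c0: "\<forall>x y. KPc U y x \<le> KPc V2 y x + enat c0"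
    using assms(1) comp pf unfolding optimal_cond_def by blast
  define D where "D = {p. M p \<noteq> None}"
  have pD: "pfree D"
    using assms(2) unfolding pfree_def D_def optimal_uncond_def prefix_free1_def by blast
  show "\<exists>x y. KPc U x y + enat d < (INF q \<in> {q. nu q y = Some x}. KPu M q)"
  proof (rule ccontr)
    assume "\<not> ?thesis"
    then have H: "(INF q \<in> {q. nu q y = Some x}. KPu M q) \<le> KPc U x y + enat d" for x y
      by (meson not_le)
    define f where "f = c0 + d + 1"
    have "2 ^ k \<le> NN D (f + k)" for k
    proof -
      define a :: nat where "a = 2 ^ (k + 1)"
      define y where "y = dec a"
      have ex: "\<exists>p. M p \<noteq> None \<and> length p \<le> f + k \<and> (\<exists>q. M p = Some q \<and> nu q y = Some (dec j))"
        if j: "j \<in> {a..<a + 2 ^ k}" for j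
      proof -
        let ?x = "dec j"
        have j1: "a \<le> j" and j2: "j < 3 * 2 ^ k" using j unfolding a_def by auto
        have V: "V2 ?x y = Some ?x" unfolding V2_def y_def using j1 j2 unfolding a_def by simp
        have lx: "length ?x \<le> k + 1"
        proof (rule ccontr)
          assume "\<not> ?thesis"
          then have "(2::nat) ^ (k + 2) \<le> 2 ^ length ?x" by (intro power_increasing) auto
          also have "\<dots> \<le> j + 1" using enc_lower[of ?x] by simp
          finally show False using j2 by simp
        qed
        have "KPc V2 ?x y \<le> enat (length ?x)" unfolding KPc_def
          by (rule INF_lower) (simp add: V)
        also have "\<dots> \<le> enat (k + 1)" using lx by simp
        finally have "KPc U ?x y \<le> enat (k + 1) + enat c0"
          using c0 by (meson add_right_mono order_trans)
        then have B: "KPc U ?x y + enat d \<le> enat (k + 1 + c0 + d)"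
          by (metis add_right_mono plus_enat_simps(1))
        have A: "(INF q \<in> {q. nu q y = Some ?x}. KPu M q) \<le> KPc U ?x y + enat d"
          by (rule H)
        have C: "enat (k + 1 + c0 + d) < enat (f + k + 1)" unfolding f_def by simp
        have "(INF q \<in> {q. nu q y = Some ?x}. KPu M q) < enat (f + k + 1)"
          using order.trans[OF A B] C by (rule order_le_less_trans)
        then obtain q where q: "nu q y = Some ?x" "KPu M q < enat (f + k + 1)"
          unfolding INF_less_iff by blast
        then obtain p where p: "M p = Some q" "enat (length p) < enat (f + k + 1)"
          unfolding KPu_def INF_less_iff by blast
        then show ?thesis using q by (intro exI[of _ p]) auto
      qed
      define P where "P j = (SOME p. M p \<noteq> None \<and> length p \<le> f + k \<and> (\<exists>q. M p = Some q \<and> nu q y = Some (dec j)))" for j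
      have P: "M (P j) \<noteq> None \<and> length (P j) \<le> f + k \<and> (\<exists>q. M (P j) = Some q \<and> nu q y = Some (dec j))"
        if "j \<in> {a..<a + 2 ^ k}" for j
        unfolding P_def by (rule someI_ex[OF ex[OF that]])
      have inj: "inj_on P {a..<a + 2 ^ k}"
      proof (rule inj_onI)
        fix i j assume i: "i \<in> {a..<a + 2 ^ k}" and j: "j \<in> {a..<a + 2 ^ k}" and e: "P i = P j"
        obtain q where "M (P i) = Some q" "nu q y = Some (dec i)" using P[OF i] by blast
        moreover obtain q' where "M (P j) = Some q'" "nu q' y = Some (dec j)" using P[OF j] by blast
        ultimately have "dec i = dec j" using e by simp
        then show "i = j" by (metis enc_dec)
      qed
      have sub: "P ` {a..<a + 2 ^ k} \<subseteq> {p\<in>D. length p \<le> f + k}"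
        using P unfolding D_def by auto
      have fin: "finite {p\<in>D. length p \<le> f + k}"
        by (rule finite_subset[OF _ finite_bl_le[of "f + k"]]) auto
      have "2 ^ k = card {a..<a + 2 ^ k}" by simp
      also have "\<dots> = card (P ` {a..<a + 2 ^ k})" using inj by (simp add: card_image)
      also have "\<dots> \<le> NN D (f + k)" unfolding NN_def by (rule card_mono[OF fin sub])
      finally show ?thesis .
    qed
    then show False using no_growth[OF pD] by blast
  qed
qed

theorem proposition4:
  fixes U :: "bool list \<Rightarrow> bool list \<Rightarrow> bool list option"
    and M :: "bool list \<Rightarrow> bool list option"
    and nu :: "bool list \<Rightarrow> bool list \<Rightarrow> bool list option"
  assumes "optimal_cond U" and "optimal_uncond M" and "goedel_numbering nu"
  shows "(\<exists>c::nat. \<forall>x y. KPc U x y \<le> (INF q \<in> {q. nu q y = Some x}. KPu M q) + enat c)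
       \<and> (\<forall>d::nat. \<exists>x y. KPc U x y + enat d < (INF q \<in> {q. nu q y = Some x}. KPu M q))"
  using enat_part1[OF assms] part2[OF assms] by blast

end
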